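(* Let $S$ be a semigroup with finite $\mathcal{R}$-height, and let $A$ be a left ideal of $S$. Then $\mathrm{H}_{\mathcal{R}}(A)\leq 2\,\mathrm{H}_{\mathcal{R}}(S)$.
   Context: For a semigroup $S$, $S^1$ denotes $S$ with an identity adjoined if necessary. Green's preorder: $a\leq_{\mathcal{R}} b$ iff $aS^1\subseteq bS^1$; $\mathcal{R}$ is the associated equivalence; the $\mathcal{R}$-height $\mathrm{H}_{\mathcal{R}}$ of a semigroup is the supremum of the cardinalities of chains in its poset of $\mathcal{R}$-classes. A left ideal is a non-empty subset $A$ with $SA\subseteq A$; $\mathrm{H}_{\mathcal{R}}(A)$ is computed in $A$ itself. *)

theory Defs
  imports Main "HOL-Library.Extended_Nat"
begin

text \<open>Semigroups are modelled by the type class semigroup_mult; the ambient semigroup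
  S is the whole type. Green's relations are taken relative to a subsemigroup A
  (with A = UNIV giving those of S).\<close>

definition R_le_in :: "'a::semigroup_mult set \<Rightarrow> 'a \<Rightarrow> 'a \<Rightarrow> bool" where
  "R_le_in A a b \<longleftrightarrow> a = b \<or> (\<exists>c\<in>A. a = b * c)"

definition R_eq_in :: "'a::semigroup_mult set \<Rightarrow> 'a \<Rightarrow> 'a \<Rightarrow> bool" where
  "R_eq_in A a b \<longleftrightarrow> R_le_in A a b \<and> R_le_in A b a"

definition R_class_in :: "'a::semigroup_mult set \<Rightarrow> 'a \<Rightarrow> 'a set" where
  "R_class_in A a = {b \<in> A. R_eq_in A a b}"

definition R_classes :: "'a::semigroup_mult set \<Rightarrow> 'a set set" where
  "R_classes A = R_class_in A ` A"

definition R_class_le :: "'a::semigroup_mult set \<Rightarrow> 'a set \<Rightarrow> 'a set \<Rightarrow> bool" where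
  "R_class_le A X Y \<longleftrightarrow> (\<exists>x\<in>X. \<exists>y\<in>Y. R_le_in A x y)"

definition R_chain :: "'a::semigroup_mult set \<Rightarrow> 'a set set \<Rightarrow> bool" where
  "R_chain A K \<longleftrightarrow> K \<subseteq> R_classes A \<and>
     (\<forall>X\<in>K. \<forall>Y\<in>K. R_class_le A X Y \<or> R_class_le A Y X)"

definition R_height :: "'a::semigroup_mult set \<Rightarrow> enat" where
  "R_height A = (SUP K \<in> {K. R_chain A K}. (if finite K then enat (card K) else \<infinity>))"

definition left_ideal :: "'a::semigroup_mult set \<Rightarrow> bool" where
  "left_ideal A \<longleftrightarrow> A \<noteq> {} \<and> (\<forall>s a. a \<in> A \<longrightarrow> s * a \<in> A)"

end

theory Submission
  imports Defs
begin

lemma le_trans_in: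
  assumes cl: "\<And>x y. x \<in> A \<Longrightarrow> y \<in> A \<Longrightarrow> x * y \<in> A"
    and "R_le_in A a b" "R_le_in A b c"
  shows "R_le_in A a c"
  using assms(2,3) unfolding R_le_in_def
  by (metis cl mult.assoc)

lemma eq_refl_in: "R_eq_in A a a"
  by (simp add: R_eq_in_def R_le_in_def)

lemma class_eq_in:
  assumes cl: "\<And>x y. x \<in> A \<Longrightarrow> y \<in> A \<Longrightarrow> x * y \<in> A"
    and "R_eq_in A a b"
  shows "R_class_in A a = R_class_in A b"
  using assms(2) le_trans_in[OF cl] unfolding R_class_in_def R_eq_in_def
  by blast

lemma mem_class: "a \<in> A \<Longrightarrow> a \<in> R_class_in A a"
  by (simp add: R_class_in_def eq_refl_in)

lemma class_le_rep:
  assumes cl: "\<And>x y. x \<in> A \<Longrightarrow> y \<in> A \<Longrightarrow> x * y \<in> A"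
    and "R_class_le A (R_class_in A a) (R_class_in A b)"
  shows "R_le_in A a b"
proof -
  obtain x y where x: "x \<in> R_class_in A a" and y: "y \<in> R_class_in A b" and xy: "R_le_in A x y"
    using assms(2) unfolding R_class_le_def by blast
  have "R_le_in A a x" using x by (simp add: R_class_in_def R_eq_in_def)
  moreover have "R_le_in A y b" using y by (simp add: R_class_in_def R_eq_in_def)
  ultimately show ?thesis using xy le_trans_in[OF cl] by blast
qed

lemma key:
  assumes li: "left_ideal A" and "a \<noteq> b" "R_le_in A b a" "R_le_in A c b" "R_le_in UNIV a c"
  shows "R_eq_in A b c"
proof -
  obtain y where y: "y \<in> A" "b = a * y" using assms(2,3) unfolding R_le_in_def by blast
  have "R_le_in A b c"
  proof (cases "a = c")
    case True then show ?thesis using y unfolding R_le_in_def by blast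
  next
    case False
    then obtain s where "a = c * s" using assms(5) unfolding R_le_in_def by blast
    then have "b = c * (s * y)" using y by (simp add: mult.assoc)
    moreover have "s * y \<in> A" using li y unfolding left_ideal_def by blast
    ultimately show ?thesis unfolding R_le_in_def by blast
  qed
  then show ?thesis using assms(4) unfolding R_eq_in_def by blast
qed

lemma no3:
  assumes "\<not> (\<exists>x\<in>F. \<exists>y\<in>F. \<exists>z\<in>F. x \<noteq> y \<and> y \<noteq> z \<and> x \<noteq> z)"
  shows "finite F \<and> card F \<le> 2"
proof (rule ccontr)
  assume "\<not> (finite F \<and> card F \<le> 2)"
  then obtain G where "G \<subseteq> F" "card G = 3"
    by (metis infinite_arbitrarily_large not_less_eq_eq numeral_3_eq_3 obtain_subset_with_card_n numeral_2_eq_2)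
  then show False using assms by (auto simp: card_3_iff)
qed

theorem corollary3p9:
  fixes A :: "'a::semigroup_mult set"
  assumes "R_height (UNIV :: 'a set) < \<infinity>"
    and "left_ideal A"
  shows "R_height A \<le> 2 * R_height (UNIV :: 'a set)"
proof -
  have clA: "\<And>x y. x \<in> A \<Longrightarrow> y \<in> A \<Longrightarrow> x * y \<in> A"
    using assms(2) unfolding left_ideal_def by blast
  have clU: "\<And>x y. x \<in> (UNIV::'a set) \<Longrightarrow> y \<in> UNIV \<Longrightarrow> x * y \<in> UNIV" by simp
  define H where "H = R_height (UNIV :: 'a set)"
  have Hup: "(if finite K then enat (card K) else \<infinity>) \<le> H" if "R_chain (UNIV::'a set) K" for K
    unfolding H_def R_height_def by (rule SUP_upper[where i=K and f="\<lambda>K. if finite K then enat (card K) else \<infinity>"]) (simp add: that)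
  have "R_height A \<le> 2 * H" unfolding R_height_def[of A]
  proof (rule SUP_least)
    fix K assume "K \<in> {K. R_chain A K}"
    then have K: "R_chain A K" by simp
    define rep where "rep X = (SOME a. a \<in> A \<and> X = R_class_in A a)" for X
    have rep: "rep X \<in> A \<and> X = R_class_in A (rep X)" if "X \<in> K" for X
    proof -
      have "\<exists>a. a \<in> A \<and> X = R_class_in A a"
        using K that unfolding R_chain_def R_classes_def by blast
      then show ?thesis unfolding rep_def by (rule someI_ex)
    qed
    define \<phi> where "\<phi> X = R_class_in UNIV (rep X)" for X
    have Kle: "R_le_in A (rep X) (rep Y) \<or> R_le_in A (rep Y) (rep X)" if "X \<in> K" "Y \<in> K" for X Y
      using K that rep class_le_rep[OF clA] unfolding R_chain_def by metis
    have chainU: "R_chain UNIV (\<phi> ` K)"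
      unfolding R_chain_def R_classes_def
    proof (intro conjI ballI)
      show "\<phi> ` K \<subseteq> R_class_in UNIV ` UNIV" unfolding \<phi>_def by auto
    next
      fix X' Y' assume "X' \<in> \<phi> ` K" "Y' \<in> \<phi> ` K"
      then obtain X Y where XY: "X \<in> K" "Y \<in> K" "X' = \<phi> X" "Y' = \<phi> Y" by blast
      have "R_le_in UNIV (rep X) (rep Y) \<or> R_le_in UNIV (rep Y) (rep X)"
        using Kle[OF XY(1,2)] unfolding R_le_in_def by blast
      then show "R_class_le UNIV X' Y' \<or> R_class_le UNIV Y' X'"
        unfolding XY \<phi>_def R_class_le_def using mem_class[of _ UNIV] by blast
    qed
    define fib where "fib Y = {X \<in> K. \<phi> X = Y}" for Y
    have fibb: "finite (fib Y) \<and> card (fib Y) \<le> 2" for Y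
    proof (rule no3, rule notI)
      assume "\<exists>x\<in>fib Y. \<exists>y\<in>fib Y. \<exists>z\<in>fib Y. x \<noteq> y \<and> y \<noteq> z \<and> x \<noteq> z"
      then obtain X1 X2 X3 where X: "X1 \<in> K" "X2 \<in> K" "X3 \<in> K" "\<phi> X1 = Y" "\<phi> X2 = Y" "\<phi> X3 = Y"
        "X1 \<noteq> X2" "X2 \<noteq> X3" "X1 \<noteq> X3" unfolding fib_def by blast
      have ueq: "R_le_in UNIV (rep P) (rep Q)" if "P \<in> K" "Q \<in> K" "\<phi> P = \<phi> Q" for P Q
      proof -
        have "rep Q \<in> \<phi> P" using that unfolding \<phi>_def by (simp add: mem_class)
        then show ?thesis unfolding \<phi>_def R_class_in_def R_eq_in_def by blast
      qed
      have neq: "\<not> R_eq_in A (rep P) (rep Q)" if "P \<in> K" "Q \<in> K" "P \<noteq> Q" for P Q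
        using that rep class_eq_in[OF clA] by metis
      have dist: "rep P \<noteq> rep Q" if "P \<in> K" "Q \<in> K" "P \<noteq> Q" for P Q
        using that rep by metis
      have k: "\<not> (R_le_in A (rep Q) (rep P) \<and> R_le_in A (rep R) (rep Q))"
        if "P \<in> K" "Q \<in> K" "R \<in> K" "P \<noteq> Q" "Q \<noteq> R" "\<phi> P = Y" "\<phi> R = Y" for P Q R
        using key[OF assms(2) dist[OF that(1,2,4)], of "rep R"] ueq[OF that(1,3)] that neq[OF that(2,3,5)]
        by auto
      have s1: "R_le_in A (rep X1) (rep X2) \<or> R_le_in A (rep X2) (rep X1)" using Kle X by blast
      have s2: "R_le_in A (rep X2) (rep X3) \<or> R_le_in A (rep X3) (rep X2)" using Kle X by blast
      have s3: "R_le_in A (rep X1) (rep X3) \<or> R_le_in A (rep X3) (rep X1)" using Kle X by blast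
      show False using s1 s2 s3 k[of X1 X2 X3] k[of X3 X2 X1] k[of X2 X1 X3] k[of X3 X1 X2]
          k[of X1 X3 X2] k[of X2 X3 X1] X by metis
    qed
    have Kun: "K = (\<Union>Y\<in>\<phi> ` K. fib Y)" unfolding fib_def by auto
    have fin: "finite (\<phi> ` K)"
      using Hup[OF chainU] assms(1) unfolding H_def by (auto split: if_splits)
    have finK: "finite K" using Kun fin fibb by (metis finite_UN_I)
    have "card K \<le> (\<Sum>Y\<in>\<phi> ` K. card (fib Y))" using Kun card_UN_le[OF fin, of fib] by simp
    also have "\<dots> \<le> (\<Sum>Y\<in>\<phi> ` K. 2)" by (rule sum_mono) (use fibb in blast)
    also have "\<dots> = 2 * card (\<phi> ` K)" by simp
    finally have c: "card K \<le> 2 * card (\<phi> ` K)" .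
    have "enat (card (\<phi> ` K)) \<le> H" using Hup[OF chainU] fin by simp
    then have "2 * enat (card (\<phi> ` K)) \<le> 2 * H" by (simp add: mult_left_mono)
    moreover have "enat (card K) \<le> 2 * enat (card (\<phi> ` K))"
      using c by (simp add: numeral_eq_enat)
    ultimately have "enat (card K) \<le> 2 * H" by (rule order_trans[rotated])
    then show "(if finite K then enat (card K) else \<infinity>) \<le> 2 * H"
      using finK by simp
  qed
  then show ?thesis unfolding H_def .
qed

end
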